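(* Let $\lambda_0,\lambda_1\in\sigma(\mathcal A)$, let $x\in\ker\Delta(\lambda_0)$, $y\in\ker\Delta^*(\bar\lambda_1)$, and let $\varphi=((I-e^{-\lambda_0}A_{-1})x,\ e^{\lambda_0\theta}x)$ and $\psi=\big(y,\ [\bar\lambda_1e^{-\bar\lambda_1\theta}-A_2^*(\theta)+e^{-\bar\lambda_1\theta}\int_0^\theta e^{\bar\lambda_1 s}(A_3^*(s)+\bar\lambda_1A_2^*(s))\,ds]\,y\big)$ (so $(\mathcal A-\lambda_0I)\varphi=0$ and $(\mathcal A^*-\bar\lambda_1I)\psi=0$). Then $\langle\varphi,\psi\rangle_{M_2}=0$ if $\lambda_0\neq\lambda_1$, and $\langle\varphi,\psi\rangle_{M_2}=-\langle\Delta'(\lambda_0)x,y\rangle_{\mathbb C^n}$ if $\lambda_0=\lambda_1$, where $\Delta'=\frac{d}{d\lambda}\Delta$.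
   Context: Setting: $n\ge1$, $A_{-1}\in\mathbb C^{n\times n}$, $A_2,A_3\in L_2([-1,0];\mathbb C^{n\times n})$; $M_2=\mathbb C^n\times L_2(-1,0;\mathbb C^n)$ with inner product $\langle(y_1,z_1),(y_2,z_2)\rangle=\langle y_1,y_2\rangle_{\mathbb C^n}+\int_{-1}^0\langle z_1(\theta),z_2(\theta)\rangle d\theta$; $\mathcal A(y,z)=\big(\int_{-1}^0A_2(\theta)z'(\theta)d\theta+\int_{-1}^0A_3(\theta)z(\theta)d\theta,\ z'\big)$ with domain $\{(y,z): z\in H^1(-1,0;\mathbb C^n),\ y=z(0)-A_{-1}z(-1)\}$. $\Delta(\lambda)=-\lambda I+\lambda e^{-\lambda}A_{-1}+\lambda\int_{-1}^0e^{\lambda s}A_2(s)ds+\int_{-1}^0e^{\lambda s}A_3(s)ds$, $\Delta^*(\lambda)$ the same with $A_{-1},A_2,A_3$ replaced by conjugate transposes, so $\Delta(\lambda)^*=\Delta^*(\bar\lambda)$; $\sigma(\mathcal A)$ is the set of roots of $\det\Delta$. *)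

theory Defs
  imports "HOL-Analysis.Analysis"
begin

text \<open>n x n complex matrices are represented as complex^'n^'n for a finite index type 'n
(so n = CARD('n) \<ge> 1). Functions on [-1,0] are total functions real \<Rightarrow> _ considered on {-1..0}.\<close>

definition msc :: "complex \<Rightarrow> complex^'n^'m \<Rightarrow> complex^'n^'m" where
  "msc c A = (\<chi> i j. c * A $ i $ j)"

definition cadj :: "complex^'n^'n \<Rightarrow> complex^'n^'n" where
  "cadj A = (\<chi> i j. cnj (A $ j $ i))"

definition cip :: "complex^'n \<Rightarrow> complex^'n \<Rightarrow> complex" where
  "cip u v = (\<Sum>i\<in>UNIV. u $ i * cnj (v $ i))"

definition L2mat :: "(real \<Rightarrow> complex^'n^'n) \<Rightarrow> bool" where
  "L2mat A \<longleftrightarrow> set_borel_measurable lborel {-1..0} A \<and>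
     set_integrable lborel {-1..0} (\<lambda>s. (norm (A s))^2)"

definition Delta :: "complex^'n^'n \<Rightarrow> (real \<Rightarrow> complex^'n^'n) \<Rightarrow> (real \<Rightarrow> complex^'n^'n)
    \<Rightarrow> complex \<Rightarrow> complex^'n^'n" where
  "Delta Am1 A2 A3 l =
     msc (-l) (mat 1) + msc (l * exp (-l)) Am1
     + msc l (LINT s:{-1..0}|lborel. msc (exp (l * of_real s)) (A2 s))
     + (LINT s:{-1..0}|lborel. msc (exp (l * of_real s)) (A3 s))"

definition Delta_star :: "complex^'n^'n \<Rightarrow> (real \<Rightarrow> complex^'n^'n) \<Rightarrow> (real \<Rightarrow> complex^'n^'n)
    \<Rightarrow> complex \<Rightarrow> complex^'n^'n" where
  "Delta_star Am1 A2 A3 = Delta (cadj Am1) (\<lambda>s. cadj (A2 s)) (\<lambda>s. cadj (A3 s))"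

definition Delta_deriv :: "complex^'n^'n \<Rightarrow> (real \<Rightarrow> complex^'n^'n) \<Rightarrow> (real \<Rightarrow> complex^'n^'n)
    \<Rightarrow> complex \<Rightarrow> complex^'n^'n" where
  "Delta_deriv Am1 A2 A3 l = (\<chi> i j. deriv (\<lambda>z. Delta Am1 A2 A3 z $ i $ j) l)"

definition M2_inner :: "(complex^'n) \<times> (real \<Rightarrow> complex^'n) \<Rightarrow> (complex^'n) \<times> (real \<Rightarrow> complex^'n) \<Rightarrow> complex" where
  "M2_inner p q = cip (fst p) (fst q) + (LINT t:{-1..0}|lborel. cip (snd p t) (snd q t))"

end

theory Submission
  imports Defs
begin


lemma cip_add_left: "cip (u + v) w = cip u w + cip v w"
  by (simp add: cip_def sum.distrib algebra_simps)
lemma cip_diff_left: "cip (u - v) w = cip u w - cip v w"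
  by (simp add: cip_def sum_subtractf algebra_simps)
lemma cip_scale_left: "cip (c *s u) w = c * cip u w"
  by (simp add: cip_def sum_distrib_left algebra_simps)
lemma cip_add_right: "cip u (v + w) = cip u v + cip u w"
  by (simp add: cip_def sum.distrib algebra_simps)
lemma cip_diff_right: "cip u (v - w) = cip u v - cip u w"
  by (simp add: cip_def sum_subtractf algebra_simps)
lemma cip_scale_right: "cip u (c *s w) = cnj c * cip u w"
  by (simp add: cip_def sum_distrib_left algebra_simps)

lemma msc_mv: "msc c M *v v = c *s (M *v v)"
  by (simp add: msc_def matrix_vector_mult_def vec_eq_iff sum_distrib_left algebra_simps)

lemma cadj_mv: "cip u (cadj M *v v) = cip (M *v u) v"
  unfolding cip_def cadj_def matrix_vector_mult_def
  by (simp add: cnj_sum sum_distrib_left sum_distrib_right, subst sum.swap, simp add: mult_ac)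

lemma cadj_msc: "cadj (msc c M) = msc (cnj c) (cadj M)"
  by (simp add: cadj_def msc_def vec_eq_iff)
lemma cadj_add: "cadj (M + N) = cadj M + cadj N"
  by (simp add: cadj_def vec_eq_iff)
lemma cadj_diff: "cadj (M - N) = cadj M - cadj N"
  by (simp add: cadj_def vec_eq_iff)
lemma cadj_mat1: "cadj (mat 1) = mat 1"
  by (simp add: cadj_def vec_eq_iff mat_def)

lemma linear_cipmv: "linear (\<lambda>M::complex^'n^'n. cip u (M *v v))"
  by (rule linearI) (simp_all add: cip_def matrix_vector_mult_def sum.distrib sum_distrib_left
      algebra_simps complex_cnj_scaleR scaleR_sum_right)
lemma bl_cipmv: "bounded_linear (\<lambda>M::complex^'n^'n. cip u (M *v v))"
  using linear_cipmv linear_conv_bounded_linear by blast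
lemma bl_entry: "bounded_linear (\<lambda>M::complex^'n^'n. M $ i $ j)"
  using linear_conv_bounded_linear
  by (metis (no_types, lifting) linearI vector_add_component vector_scaleR_component)
lemma linear_cadj: "linear (cadj :: complex^'n^'n \<Rightarrow> _)"
  by (rule linearI) (simp_all add: cadj_def vec_eq_iff complex_cnj_scaleR)
lemma bl_cadj: "bounded_linear (cadj :: complex^'n^'n \<Rightarrow> _)"
  using linear_cadj linear_conv_bounded_linear by blast

lemma norm_row_msc: "norm (\<chi> j. c * (v::complex^'n) $ j) = cmod c * norm v"
  unfolding norm_vec_def by (simp add: L2_set_right_distrib norm_mult)

lemma norm_msc: "norm (msc c (M::complex^'n^'m)) = cmod c * norm M"
proof -
  have r: "\<And>i. norm (msc c M $ i) = cmod c * norm (M$i)" using norm_row_msc by (simp add: msc_def)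
  have "norm (msc c M) = L2_set (\<lambda>i. cmod c * norm (M $ i)) UNIV"
    unfolding norm_vec_def[of "msc c M"] r by simp
  also have "\<dots> = cmod c * norm M"
    unfolding norm_vec_def[of M] by (simp add: L2_set_right_distrib)
  finally show ?thesis .
qed



lemma L2mat_int: assumes L: "L2mat A" shows "set_integrable lborel {-1..0::real} A"
proof -
  have m: "(\<lambda>s. indicator {-1..0} s *\<^sub>R A s) \<in> borel_measurable lborel"
    using L by (simp add: L2mat_def set_borel_measurable_def)
  have i2: "integrable lborel (\<lambda>s. indicator {-1..0::real} s *\<^sub>R (norm (A s))^2)"
    using L by (simp add: L2mat_def set_integrable_def)
  have i1: "integrable lborel (\<lambda>s. indicator {-1..0::real} s :: real)"
    by (rule integrable_real_indicator) auto
  have i: "integrable lborel (\<lambda>s. indicator {-1..0::real} s + indicator {-1..0::real} s *\<^sub>R (norm (A s))^2)"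
    using i1 i2 by (rule Bochner_Integration.integrable_add)
  have le: "\<And>n::real. n \<le> 1 + n^2" proof -
    fix n :: real
    have "0 \<le> (n - 1)*(n - 1)" by simp
    then have "0 \<le> n*n - 2*n + 1" by (simp add: algebra_simps)
    moreover have "0 \<le> n*n" by simp
    ultimately show "n \<le> 1 + n^2" unfolding power2_eq_square by linarith
  qed
  show ?thesis unfolding set_integrable_def
    by (rule Bochner_Integration.integrable_bound[OF i m]) (auto simp: indicator_def le)
qed

lemma sint_bl:
  assumes T: "bounded_linear T" and f: "set_integrable M A f"
  shows "set_integrable M A (\<lambda>x. T (f x))" "(LINT x:A|M. T (f x)) = T (LINT x:A|M. f x)"
proof -
  have eq: "(\<lambda>x. indicator A x *\<^sub>R T (f x)) = (\<lambda>x. T (indicator A x *\<^sub>R f x))"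
    using real_vector.linear_scale[OF bounded_linear.linear[OF T]] by simp
  show "set_integrable M A (\<lambda>x. T (f x))" using f unfolding set_integrable_def eq
    by (rule integrable_bounded_linear[OF T])
  show "(LINT x:A|M. T (f x)) = T (LINT x:A|M. f x)" using f
    unfolding set_integrable_def set_lebesgue_integral_def eq
    by (rule integral_bounded_linear[OF T])
qed

lemma msc_scaleR: "msc c (r *\<^sub>R M) = r *\<^sub>R msc c M"
  by (simp add: msc_def vec_eq_iff)

lemma cont_msc: "continuous_on UNIV (\<lambda>x::complex \<times> (complex^'n^'m). msc (fst x) (snd x))"
  unfolding msc_def by (intro continuous_intros)

lemma int_msc:
  fixes A :: "real \<Rightarrow> complex^'n^'m"
  assumes A: "set_integrable lborel S A" and S: "S \<in> sets lborel"
    and g: "g \<in> borel_measurable lborel" and B: "\<And>s. s \<in> S \<Longrightarrow> cmod (g s) \<le> B"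
  shows "set_integrable lborel S (\<lambda>s. msc (g s) (A s))"
proof (rule set_integrable_bound)
  show "set_integrable lborel S (\<lambda>s. \<bar>B\<bar> * norm (A s))"
    using set_integrable_norm[OF A] by (rule set_integrable_mult_right)
  have m: "(\<lambda>s. indicator S s *\<^sub>R A s) \<in> borel_measurable lborel"
    using A unfolding set_integrable_def by (rule borel_measurable_integrable)
  have "(\<lambda>s. msc (g s) (indicator S s *\<^sub>R A s)) \<in> borel_measurable lborel"
    by (rule borel_measurable_continuous_Pair[OF g m cont_msc])
  then show "set_borel_measurable lborel S (\<lambda>s. msc (g s) (A s))"
    unfolding set_borel_measurable_def by (simp add: msc_scaleR)
  show "AE x in lborel. x \<in> S \<longrightarrow> norm (msc (g x) (A x)) \<le> norm (\<bar>B\<bar> * norm (A x))"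
  proof (intro AE_I2 impI)
    fix x assume "x \<in> S"
    then have "cmod (g x) \<le> \<bar>B\<bar>" using B[of x] by linarith
    then show "norm (msc (g x) (A x)) \<le> norm (\<bar>B\<bar> * norm (A x))"
      by (simp add: norm_msc mult_right_mono)
  qed
qed



lemma exp_quad_bound:
  fixes z :: complex
  assumes "norm z \<le> 1 / 2"
  shows "norm (exp z - 1 - z) \<le> norm z ^ 2"
proof (cases "z = 0")
  case False
  have sums: "(\<lambda>k. z ^ (k + 2) /\<^sub>R fact (k + 2)) sums (exp z - (\<Sum>k<2. z ^ k /\<^sub>R fact k))"
    by (intro sums_split_initial_segment exp_converges)
  have "summable (\<lambda>k. norm z ^ (k + 2) /\<^sub>R fact (k + 2))"
    using summable_norm_exp[of z]
    by (intro summable_norm summable_ignore_initial_segment)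
       (auto simp: norm_power norm_divide divide_simps)
  also have "?this \<longleftrightarrow> summable (\<lambda>k. norm z ^ 2 * (norm z ^ k / fact (k +2)))"
    by (simp add: power_add mult_ac divide_simps power2_eq_square del: of_nat_Suc of_nat_add)
  also have "\<dots> \<longleftrightarrow> summable (\<lambda>k. norm z ^ k / fact (k + 2))"
    by (subst summable_cmult_iff) (use \<open>z \<noteq> 0\<close> in auto)
  finally have summable: "summable (\<lambda>k. norm z ^ k / fact (k + 2))" .
  have "exp z - 1 - z = (\<Sum>k. z ^ (k + 2) / fact (k + 2))"
    using sums by (simp add: sums_iff scaleR_conv_of_real divide_simps eval_nat_numeral)
  also have "norm \<dots> \<le> (\<Sum>k. norm (z ^ (k + 2) / fact (k + 2)))"
    using summable_norm_exp[of z]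
    by (intro summable_norm summable_ignore_initial_segment)
       (auto simp: norm_power norm_divide divide_simps)
  also have "\<dots> = (\<Sum>k. norm z ^ 2 * (norm z ^ k / fact (k + 2)))"
    by (simp add: power_add norm_power norm_divide mult_ac norm_mult power2_eq_square del: of_nat_Suc)
  also have "\<dots> = norm z ^ 2 * (\<Sum>k. norm z ^ k / fact (k + 2))"
    using summable by (rule suminf_mult)
  also have "\<dots> \<le> norm z ^ 2 * (1 / (1 - norm z) / 2)"
  proof (intro mult_left_mono, rule sums_le)
    show "(\<lambda>k. norm z ^ k / fact (k + 2)) sums (\<Sum>k. norm z ^ k / fact (k + 2))"
      using summable by blast
    show "(\<lambda>k. norm z ^ k / 2) sums (1 / (1 - norm z) / 2)"
      using assms by (intro geometric_sums sums_divide) auto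
  next
    fix k :: nat
    have "norm z ^ k / fact (k + 2) \<le> norm z ^ k / fact 2"
      by (intro divide_left_mono fact_mono) auto
    thus "norm z ^ k / fact (k + 2) \<le> norm z ^ k / 2"
      by simp
  qed (auto simp: divide_simps)
  also have "\<dots> \<le> norm z ^ 2 * 1"
  proof (intro mult_left_mono)
    show "1 / (1 - norm z) / 2 \<le> 1" using assms by (simp add: divide_simps)
  qed auto
  finally show ?thesis by simp
qed auto



lemma int_mult:
  fixes a :: "real \<Rightarrow> complex"
  assumes A: "set_integrable lborel S a" and S: "S \<in> sets lborel"
    and g: "g \<in> borel_measurable lborel" and B: "\<And>s. s \<in> S \<Longrightarrow> cmod (g s) \<le> B"
  shows "set_integrable lborel S (\<lambda>s. g s * a s)"
proof (rule set_integrable_bound)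
  show "set_integrable lborel S (\<lambda>s. \<bar>B\<bar> * norm (a s))"
    using set_integrable_norm[OF A] by (rule set_integrable_mult_right)
  have m: "(\<lambda>s. indicator S s *\<^sub>R a s) \<in> borel_measurable lborel"
    using A unfolding set_integrable_def by (rule borel_measurable_integrable)
  have "(\<lambda>s. g s * (indicator S s *\<^sub>R a s)) \<in> borel_measurable lborel"
    using g m by measurable
  then show "set_borel_measurable lborel S (\<lambda>s. g s * a s)"
    unfolding set_borel_measurable_def by (simp add: mult_scaleR_right)
  show "AE x in lborel. x \<in> S \<longrightarrow> norm (g x * a x) \<le> norm (\<bar>B\<bar> * norm (a x))"
  proof (intro AE_I2 impI)
    fix x assume "x \<in> S"
    then have "cmod (g x) \<le> \<bar>B\<bar>" using B[of x] by linarith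
    then show "norm (g x * a x) \<le> norm (\<bar>B\<bar> * norm (a x))"
      by (simp add: norm_mult mult_right_mono)
  qed
qed

lemma norm_exp_ls: "s \<in> {-1..0::real} \<Longrightarrow> cmod (exp (l * of_real s)) \<le> exp (cmod l)"
proof -
  assume s: "s \<in> {-1..0::real}"
  have "cmod (exp (l * of_real s)) \<le> exp (cmod (l * of_real s))" by (rule norm_exp)
  also have "cmod (l * of_real s) \<le> cmod l" using s mult_left_mono[of "-s" 1 "cmod l"]
    by (auto simp: norm_mult)
  then have "exp (cmod (l * of_real s)) \<le> exp (cmod l)" by simp
  finally show ?thesis .
qed

lemma int_exp:
  fixes a :: "real \<Rightarrow> complex"
  assumes A: "set_integrable lborel {-1..0} a"
  shows "set_integrable lborel {-1..0} (\<lambda>s. exp (l * of_real s) * a s)"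
    "set_integrable lborel {-1..0} (\<lambda>s. of_real s * exp (l * of_real s) * a s)"
proof -
  show "set_integrable lborel {-1..0} (\<lambda>s. exp (l * of_real s) * a s)"
    by (rule int_mult[OF A _ _ norm_exp_ls]) auto
  have "set_integrable lborel {-1..0} (\<lambda>s. (of_real s * exp (l * of_real s)) * a s)"
  proof (rule int_mult[OF A])
    fix s :: real assume s: "s \<in> {-1..0}"
    have "cmod (of_real s * exp (l * of_real s)) \<le> 1 * exp (cmod l)"
      unfolding norm_mult using s norm_exp_ls[OF s] by (intro mult_mono) auto
    then show "cmod (of_real s * exp (l * of_real s)) \<le> exp (cmod l)" by simp
  qed auto
  then show "set_integrable lborel {-1..0} (\<lambda>s. of_real s * exp (l * of_real s) * a s)" .
qed



lemma deriv_int: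
  fixes a :: "real \<Rightarrow> complex"
  assumes a: "set_integrable lborel {-1..0} a"
  shows "((\<lambda>l. LINT s:{-1..0}|lborel. exp (l * of_real s) * a s) has_field_derivative
          (LINT s:{-1..0}|lborel. of_real s * exp (l * of_real s) * a s)) (at l)"
proof -
  define S where "S = {-1..0::real}"
  define F where "F l = (LINT s:S|lborel. exp (l * of_real s) * a s)" for l
  define G where "G = (LINT s:S|lborel. of_real s * exp (l * of_real s) * a s)"
  define N where "N = (LINT s:S|lborel. norm (a s))"
  note iF = int_exp(1)[OF a, folded S_def]
  note iG = int_exp(2)[OF a, folded S_def]
  have an: "set_integrable lborel S (\<lambda>s. norm (a s))" using set_integrable_norm[OF a] S_def by simp
  have key: "cmod (F y - F l - (y - l) * G) \<le> exp (cmod l) * cmod (y - l)^2 * N"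
    if y: "cmod (y - l) \<le> 1/2" for y
  proof -
    define h where "h = y - l"
    have i1: "set_integrable lborel S (\<lambda>s. exp (y * of_real s) * a s - exp (l * of_real s) * a s)"
      by (rule set_integral_diff(1)[OF iF iF])
    have i2: "set_integrable lborel S (\<lambda>s. (y - l) * (of_real s * exp (l * of_real s) * a s))"
      by (rule set_integrable_mult_right) (rule iG)
    have i3: "set_integrable lborel S (\<lambda>s. exp (y * of_real s) * a s - exp (l * of_real s) * a s
          - (y - l) * (of_real s * exp (l * of_real s) * a s))"
      by (rule set_integral_diff(1)[OF i1 i2])
    have "cmod (F y - F l - (y - l) * G) = cmod
      (LINT s:S|lborel. exp (y * of_real s) * a s - exp (l * of_real s) * a s
          - (y - l) * (of_real s * exp (l * of_real s) * a s))"
      unfolding F_def G_def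
      by (simp only: set_integral_diff(2)[OF i1 i2] set_integral_diff(2)[OF iF iF] set_integral_mult_right)
    also have "\<dots> \<le> (LINT s:S|lborel. cmod (exp (y * of_real s) * a s - exp (l * of_real s) * a s
          - (y - l) * (of_real s * exp (l * of_real s) * a s)))"
      by (rule set_integral_norm_bound[OF i3])
    also have "\<dots> \<le> (LINT s:S|lborel. (exp (cmod l) * cmod (y - l)^2) * norm (a s))"
    proof (rule set_integral_mono)
      show "set_integrable lborel S (\<lambda>s. cmod (exp (y * of_real s) * a s - exp (l * of_real s) * a s
          - (y - l) * (of_real s * exp (l * of_real s) * a s)))"
        by (rule set_integrable_norm[OF i3])
      show "set_integrable lborel S (\<lambda>s. (exp (cmod l) * cmod (y - l)^2) * norm (a s))"
        using an by (rule set_integrable_mult_right)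
      fix s assume s: "s \<in> S"
      have ey: "exp (y * of_real s) = exp (l * of_real s) * exp (h * of_real s)"
        unfolding h_def exp_add[symmetric] by (simp add: algebra_simps)
      have e: "exp (y * of_real s) * a s - exp (l * of_real s) * a s
          - (y - l) * (of_real s * exp (l * of_real s) * a s)
          = exp (l * of_real s) * (exp (h * of_real s) - 1 - h * of_real s) * a s"
        unfolding ey h_def by (simp add: algebra_simps)
      have hs: "cmod (h * of_real s) \<le> cmod h" using s mult_left_mono[of "-s" 1 "cmod h"]
        by (auto simp: S_def norm_mult)
      have b1: "cmod (exp (h * of_real s) - 1 - h * of_real s) \<le> cmod h ^ 2"
      proof -
        have "cmod (h * of_real s) \<le> 1/2" using hs y unfolding h_def by linarith
        then have "cmod (exp (h * of_real s) - 1 - h * of_real s) \<le> cmod (h * of_real s) ^ 2"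
          by (rule exp_quad_bound)
        also have "\<dots> \<le> cmod h ^ 2" using hs by (intro power_mono) auto
        finally show ?thesis .
      qed
      have b2: "cmod (exp (l * of_real s) * (exp (h * of_real s) - 1 - h * of_real s)) \<le> exp (cmod l) * cmod h ^ 2"
        unfolding norm_mult using norm_exp_ls[of s l] s b1 unfolding S_def
        by (intro mult_mono) auto
      show "cmod (exp (y * of_real s) * a s - exp (l * of_real s) * a s
          - (y - l) * (of_real s * exp (l * of_real s) * a s)) \<le> (exp (cmod l) * cmod (y - l)^2) * norm (a s)"
        unfolding e norm_mult[of _ "a s"] using b2 unfolding h_def by (rule mult_right_mono) simp
    qed
    also have "\<dots> = exp (cmod l) * cmod (y - l)^2 * N"
      unfolding N_def by (rule set_integral_mult_right)
    finally show ?thesis .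
  qed
  have "((\<lambda>y. (F y - F l) / (y - l) - G) \<longlongrightarrow> 0) (at l)"
  proof (rule Lim_null_comparison)
    show "\<forall>\<^sub>F y in at l. cmod ((F y - F l) / (y - l) - G) \<le> exp (cmod l) * N * cmod (y - l)"
      unfolding eventually_at
    proof (intro exI[of _ "1/2"] conjI ballI impI)
      fix y assume yy: "y \<in> UNIV" "y \<noteq> l \<and> dist y l < 1/2"
      then have ne: "y - l \<noteq> 0" and d: "cmod (y - l) \<le> 1/2" by (auto simp: dist_norm)
      have "(F y - F l) / (y - l) - G = (F y - F l - (y - l) * G) / (y - l)"
        using ne by (simp add: field_simps)
      then have "cmod ((F y - F l) / (y - l) - G) = cmod (F y - F l - (y - l) * G) / cmod (y - l)"
        by (simp add: norm_divide)
      also have "\<dots> \<le> exp (cmod l) * cmod (y - l)^2 * N / cmod (y - l)"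
        using key[OF d] ne by (intro divide_right_mono) auto
      also have "\<dots> = exp (cmod l) * N * cmod (y - l)"
        using ne by (simp add: power2_eq_square)
      finally show "cmod ((F y - F l) / (y - l) - G) \<le> exp (cmod l) * N * cmod (y - l)" .
    qed simp
    show "((\<lambda>y. exp (cmod l) * N * cmod (y - l)) \<longlongrightarrow> 0) (at l)"
      by (intro tendsto_eq_intros) auto
  qed
  then have "((\<lambda>y. (F y - F l) / (y - l)) \<longlongrightarrow> G) (at l)"
    by (simp add: LIM_zero_iff)
  then show ?thesis unfolding has_field_derivative_iff F_def G_def S_def .
qed



lemma fub:
  fixes a :: "real \<Rightarrow> complex" and \<mu> :: complex
  assumes a: "set_integrable lborel {-1..0} a"
  shows "(LINT t:{-1..0}|lborel. exp (\<mu> * of_real t) * (LINT s:{t..0}|lborel. a s))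
       = (LINT s:{-1..0}|lborel. a s * (LINT t:{-1..s}|lborel. exp (\<mu> * of_real t)))"
    and "set_integrable lborel {-1..0} (\<lambda>t. exp (\<mu> * of_real t) * (LINT s:{t..0}|lborel. a s))"
proof -
  define b where "b s = of_real (indicator {-1..0::real} s) * a s" for s
  have bi: "integrable lborel b"
    using a unfolding set_integrable_def b_def by (simp add: scaleR_conv_of_real)
  have bm0: "b \<in> borel_measurable lborel" using bi by (rule borel_measurable_integrable)
  have bm[measurable]: "b \<in> borel_measurable borel" using bm0 by simp
  have em[measurable]: "(\<lambda>t. exp (\<mu> * of_real t)) \<in> borel_measurable borel"
    by (intro borel_measurable_continuous_onI continuous_intros)
  define f where "f t s = of_real (indicator {-1..0::real} t) * of_real (of_bool (t \<le> s \<and> s \<le> 0))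
      * exp (\<mu> * of_real t) * b s" for t s
  define h where "h t s = indicator {-1..0::real} t * exp (cmod \<mu>) * norm (b s)" for t s
  have fm: "(\<lambda>(t,s). f t s) \<in> borel_measurable (lborel \<Otimes>\<^sub>M lborel)"
    unfolding f_def by measurable
  have hm: "(\<lambda>(t,s). h t s) \<in> borel_measurable (lborel \<Otimes>\<^sub>M lborel)"
    unfolding h_def by measurable
  have hi: "integrable (lborel \<Otimes>\<^sub>M lborel) (\<lambda>(t,s). h t s)"
  proof (rule lborel_pair.Fubini_integrable)
    show "(\<lambda>(t,s). h t s) \<in> borel_measurable (lborel \<Otimes>\<^sub>M lborel)" by (rule hm)
    have "(\<lambda>t. \<integral>s. norm (h t s) \<partial>lborel) = (\<lambda>t. indicator {-1..0::real} t * (exp (cmod \<mu>) * \<integral>s. norm (b s) \<partial>lborel))"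
      unfolding h_def by (auto simp: indicator_def)
    moreover have "integrable lborel (\<lambda>t. indicator {-1..0::real} t * (exp (cmod \<mu>) * \<integral>s. norm (b s) \<partial>lborel))"
      by (intro integrable_mult_left integrable_real_indicator) auto
    ultimately show "integrable lborel (\<lambda>t. \<integral>s. norm (case (t, s) of (t, s) \<Rightarrow> h t s) \<partial>lborel)" by simp
    show "AE t in lborel. integrable lborel (\<lambda>s. case (t, s) of (t, s) \<Rightarrow> h t s)"
      unfolding h_def using bi by (auto intro!: AE_I2)
  qed
  have fi: "integrable (lborel \<Otimes>\<^sub>M lborel) (\<lambda>(t,s). f t s)"
  proof (rule Bochner_Integration.integrable_bound[OF hi fm], intro AE_I2)
    fix p :: "real \<times> real"
    obtain t s where p: "p = (t,s)" by (cases p)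
    show "norm (case p of (t,s) \<Rightarrow> f t s) \<le> norm (case p of (t,s) \<Rightarrow> h t s)"
    proof (cases "t \<in> {-1..0}")
      case True
      have "cmod (exp (\<mu> * of_real t)) \<le> exp (cmod \<mu>)" using norm_exp_ls[OF True] .
      then show ?thesis unfolding p f_def h_def using True
        by (auto simp: norm_mult indicator_def intro!: mult_right_mono)
    qed (simp add: p f_def h_def)
  qed
  have F: "(\<integral>s. \<integral>t. f t s \<partial>lborel \<partial>lborel) = (\<integral>t. \<integral>s. f t s \<partial>lborel \<partial>lborel)"
    using fi by (rule lborel_pair.Fubini_integral)
  have Lpt: "indicator {-1..0} t *\<^sub>R (exp (\<mu> * of_real t) * (\<integral>s. indicator {t..0} s *\<^sub>R a s \<partial>lborel))
        = (\<integral>s. f t s \<partial>lborel)" for t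
  proof -
    show "indicator {-1..0} t *\<^sub>R (exp (\<mu> * of_real t) * (\<integral>s. indicator {t..0} s *\<^sub>R a s \<partial>lborel))
        = (\<integral>s. f t s \<partial>lborel)"
    proof (cases "t \<in> {-1..0}")
      case True
      have "(\<lambda>s. f t s) = (\<lambda>s. exp (\<mu> * of_real t) * (of_real (indicator {t..0} s) * a s))"
        using True unfolding f_def b_def by (auto simp: indicator_def scaleR_conv_of_real)
      then show ?thesis using True by (simp add: scaleR_conv_of_real)
    qed (simp add: f_def)
  qed
  have L: "(LINT t:{-1..0}|lborel. exp (\<mu> * of_real t) * (LINT s:{t..0}|lborel. a s))
      = (\<integral>t. \<integral>s. f t s \<partial>lborel \<partial>lborel)"
    unfolding set_lebesgue_integral_def using Lpt by simp
  have "integrable lborel (\<lambda>t. \<integral>s. f t s \<partial>lborel)"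
    using fi by (rule lborel_pair.integrable_fst)
  then show "set_integrable lborel {-1..0} (\<lambda>t. exp (\<mu> * of_real t) * (LINT s:{t..0}|lborel. a s))"
    unfolding set_integrable_def set_lebesgue_integral_def using Lpt by simp
  have R: "(LINT s:{-1..0}|lborel. a s * (LINT t:{-1..s}|lborel. exp (\<mu> * of_real t)))
      = (\<integral>s. \<integral>t. f t s \<partial>lborel \<partial>lborel)"
    unfolding set_lebesgue_integral_def
  proof (rule Bochner_Integration.integral_cong[OF refl])
    fix s :: real
    show "indicator {-1..0} s *\<^sub>R (a s * (\<integral>t. indicator {-1..s} t *\<^sub>R exp (\<mu> * of_real t) \<partial>lborel))
        = (\<integral>t. f t s \<partial>lborel)"
    proof (cases "s \<in> {-1..0}")
      case True
      have "(\<lambda>t. f t s) = (\<lambda>t. a s * (of_real (indicator {-1..s} t) * exp (\<mu> * of_real t)))"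
        using True unfolding f_def b_def by (auto simp: indicator_def scaleR_conv_of_real)
      then show ?thesis using True by (simp add: scaleR_conv_of_real)
    qed (simp add: f_def b_def)
  qed
  show "(LINT t:{-1..0}|lborel. exp (\<mu> * of_real t) * (LINT s:{t..0}|lborel. a s))
       = (LINT s:{-1..0}|lborel. a s * (LINT t:{-1..s}|lborel. exp (\<mu> * of_real t)))"
    using L R F by simp
qed



lemma expint:
  fixes \<mu> :: complex and s :: real
  assumes s: "-1 \<le> s"
  shows "(LINT t:{-1..s}|lborel. exp (\<mu> * of_real t))
       = (if \<mu> = 0 then of_real (s + 1) else (exp (\<mu> * of_real s) - exp (-\<mu>)) / \<mu>)"
proof -
  define G where "G z = (if \<mu> = 0 then z else exp (\<mu> * z) / \<mu>)" for z :: complex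
  have dG: "(G has_field_derivative exp (\<mu> * z)) (at z)" for z
  proof (cases "\<mu> = 0")
    case True then show ?thesis unfolding G_def by (simp add: DERIV_ident)
  next
    case False
    have "((\<lambda>z. exp (\<mu> * z) / \<mu>) has_field_derivative exp (\<mu> * z) * \<mu> / \<mu>) (at z)"
      by (intro derivative_eq_intros) (use False in auto)
    then show ?thesis unfolding G_def using False by simp
  qed
  have "(LBINT t=ereal (-1)..ereal s. exp (\<mu> * of_real t)) = G (of_real s) - G (of_real (-1))"
  proof (rule interval_integral_FTC_finite)
    show "continuous_on {min (- 1) s..max (- 1) s} (\<lambda>t. exp (\<mu> * complex_of_real t))"
      by (intro continuous_intros)
    fix x :: real
    show "((\<lambda>t. G (of_real t)) has_vector_derivative exp (\<mu> * of_real x)) (at x within {min (- 1) s..max (- 1) s})"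
      by (rule has_vector_derivative_real_field[OF dG])
  qed
  moreover have "(LBINT t=ereal (-1)..ereal s. exp (\<mu> * of_real t)) = (LINT t:{-1..s}|lborel. exp (\<mu> * of_real t))"
    by (rule interval_integral_Icc[OF s])
  ultimately show ?thesis unfolding G_def by (auto simp: diff_divide_distrib)
qed



lemma linear_cipmv2: "linear (\<lambda>M::complex^'n^'n. cip (M *v u) v)"
  apply (rule linearI)
   apply (simp add: cip_def matrix_vector_mult_def sum.distrib sum_distrib_right algebra_simps)
  apply (simp only: cip_def matrix_vector_mult_def vector_scaleR_component vec_lambda_beta)
  apply (simp add: scaleR_conv_of_real sum_distrib_left sum_distrib_right mult_ac)
  done
lemma bl_cipmv2: "bounded_linear (\<lambda>M::complex^'n^'n. cip (M *v u) v)"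
  using linear_cipmv2 linear_conv_bounded_linear by blast

lemma cip_neg_mat: "cip u ((- M) *v v) = - cip u (M *v v)"
  by (simp add: cip_def matrix_vector_mult_def sum_negf)

lemma cip_int_msc_l:
  fixes A :: "real \<Rightarrow> complex^'n^'n"
  assumes A: "set_integrable lborel S A" and S: "S \<in> sets lborel"
    and g: "g \<in> borel_measurable lborel" and B: "\<And>s. s \<in> S \<Longrightarrow> cmod (g s) \<le> B"
  shows "cip ((LINT s:S|lborel. msc (g s) (A s)) *v x) y = (LINT s:S|lborel. g s * cip (A s *v x) y)"
  using sint_bl(2)[OF bl_cipmv2 int_msc[OF A S g B], of x y]
  by (simp add: msc_mv cip_scale_left)

lemma cip_int_msc_r:
  fixes A :: "real \<Rightarrow> complex^'n^'n"
  assumes A: "set_integrable lborel S A" and S: "S \<in> sets lborel"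
    and g: "g \<in> borel_measurable lborel" and B: "\<And>s. s \<in> S \<Longrightarrow> cmod (g s) \<le> B"
  shows "cip x ((LINT s:S|lborel. msc (g s) (A s)) *v y) = (LINT s:S|lborel. cnj (g s) * cip x (A s *v y))"
  using sint_bl(2)[OF bl_cipmv int_msc[OF A S g B], of x y]
  by (simp add: msc_mv cip_scale_right)

lemma meas_exp[measurable]: "(\<lambda>s::real. exp ((l::complex) * of_real s)) \<in> borel_measurable borel"
  by (intro borel_measurable_continuous_onI continuous_intros)
lemma meas_sexp[measurable]: "(\<lambda>s::real. of_real s * exp ((l::complex) * of_real s)) \<in> borel_measurable borel"
  by (intro borel_measurable_continuous_onI continuous_intros)

lemma meas_exp_lb: "(\<lambda>s::real. exp ((l::complex) * of_real s)) \<in> borel_measurable lborel"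
  using meas_exp by simp
lemma meas_sexp_lb: "(\<lambda>s::real. of_real s * exp ((l::complex) * of_real s)) \<in> borel_measurable lborel"
  using meas_sexp by simp

lemma norm_sexp_ls: "s \<in> {-1..0::real} \<Longrightarrow> cmod (of_real s * exp (l * of_real s)) \<le> exp (cmod l)"
proof -
  assume s: "s \<in> {-1..0::real}"
  have "cmod (of_real s * exp (l * of_real s)) \<le> 1 * exp (cmod l)"
    unfolding norm_mult using s norm_exp_ls[OF s] by (intro mult_mono) auto
  then show ?thesis by simp
qed

lemma Sm: "{-1..0::real} \<in> sets lborel" by simp

lemma Dcip:
  assumes i2: "set_integrable lborel {-1..0} A2" and i3: "set_integrable lborel {-1..0} A3"
  shows "cip (Delta Am1 A2 A3 l *v x) y = - l * cip x y + l * exp (-l) * cip (Am1 *v x) y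
     + l * (LINT s:{-1..0}|lborel. exp (l * of_real s) * cip (A2 s *v x) y)
     + (LINT s:{-1..0}|lborel. exp (l * of_real s) * cip (A3 s *v x) y)"
proof -
  have e2: "cip ((LINT s:{-1..0}|lborel. msc (exp (l * of_real s)) (A2 s)) *v x) y
     = (LINT s:{-1..0}|lborel. exp (l * of_real s) * cip (A2 s *v x) y)"
    by (rule cip_int_msc_l[OF i2 Sm meas_exp_lb norm_exp_ls])
  have e3: "cip ((LINT s:{-1..0}|lborel. msc (exp (l * of_real s)) (A3 s)) *v x) y
     = (LINT s:{-1..0}|lborel. exp (l * of_real s) * cip (A3 s *v x) y)"
    by (rule cip_int_msc_l[OF i3 Sm meas_exp_lb norm_exp_ls])
  show ?thesis unfolding Delta_def
    by (simp add: matrix_vector_mult_add_rdistrib cip_add_left cip_diff_left msc_mv cip_scale_left e2 e3)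
qed



lemma Dstar:
  assumes i2: "set_integrable lborel {-1..0} A2" and i3: "set_integrable lborel {-1..0} A3"
  shows "Delta_star Am1 A2 A3 (cnj l) = cadj (Delta Am1 A2 A3 l)"
proof -
  have c2: "cadj (LINT s:{-1..0}|lborel. msc (exp (l * of_real s)) (A2 s))
      = (LINT s:{-1..0}|lborel. msc (exp (cnj l * of_real s)) (cadj (A2 s)))"
    using sint_bl(2)[OF bl_cadj int_msc[OF i2 Sm meas_exp_lb norm_exp_ls]]
    by (simp add: cadj_msc exp_cnj)
  have c3: "cadj (LINT s:{-1..0}|lborel. msc (exp (l * of_real s)) (A3 s))
      = (LINT s:{-1..0}|lborel. msc (exp (cnj l * of_real s)) (cadj (A3 s)))"
    using sint_bl(2)[OF bl_cadj int_msc[OF i3 Sm meas_exp_lb norm_exp_ls]]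
    by (simp add: cadj_msc exp_cnj)
  show ?thesis unfolding Delta_star_def Delta_def
    by (simp add: cadj_add cadj_msc cadj_mat1 c2 c3 exp_cnj)
qed

lemma entry_int:
  fixes A :: "real \<Rightarrow> complex^'n^'n"
  assumes A: "set_integrable lborel S A" and S: "S \<in> sets lborel"
    and g: "g \<in> borel_measurable lborel" and B: "\<And>s. s \<in> S \<Longrightarrow> cmod (g s) \<le> B"
  shows "(LINT s:S|lborel. msc (g s) (A s)) $ i $ j = (LINT s:S|lborel. g s * A s $ i $ j)"
  using sint_bl(2)[OF bl_entry int_msc[OF A S g B], of i j]
  by (simp add: msc_def)

lemma msc_entry: "msc c M $ i $ j = c * M $ i $ j"
  by (simp add: msc_def)

lemma Dderiv:
  assumes i2: "set_integrable lborel {-1..0} A2" and i3: "set_integrable lborel {-1..0} A3"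
  shows "Delta_deriv Am1 A2 A3 l = msc (-1) (mat 1) + msc (exp (-l) - l * exp (-l)) Am1
     + (LINT s:{-1..0}|lborel. msc (exp (l * of_real s)) (A2 s))
     + msc l (LINT s:{-1..0}|lborel. msc (of_real s * exp (l * of_real s)) (A2 s))
     + (LINT s:{-1..0}|lborel. msc (of_real s * exp (l * of_real s)) (A3 s))"
proof -
  have "deriv (\<lambda>z. Delta Am1 A2 A3 z $ i $ j) l =
      (msc (-1) (mat 1) + msc (exp (-l) - l * exp (-l)) Am1
     + (LINT s:{-1..0}|lborel. msc (exp (l * of_real s)) (A2 s))
     + msc l (LINT s:{-1..0}|lborel. msc (of_real s * exp (l * of_real s)) (A2 s))
     + (LINT s:{-1..0}|lborel. msc (of_real s * exp (l * of_real s)) (A3 s))) $ i $ j" for i j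
  proof -
    define c1 where "c1 = (mat 1 :: complex^'a^'a) $ i $ j"
    define c2 where "c2 = Am1 $ i $ j"
    define F2 where "F2 z = (LINT s:{-1..0}|lborel. exp (z * of_real s) * A2 s $ i $ j)" for z
    define F3 where "F3 z = (LINT s:{-1..0}|lborel. exp (z * of_real s) * A3 s $ i $ j)" for z
    define G2 where "G2 z = (LINT s:{-1..0}|lborel. of_real s * exp (z * of_real s) * A2 s $ i $ j)" for z
    define G3 where "G3 z = (LINT s:{-1..0}|lborel. of_real s * exp (z * of_real s) * A3 s $ i $ j)" for z
    have a2: "set_integrable lborel {-1..0} (\<lambda>s. A2 s $ i $ j)" by (rule sint_bl(1)[OF bl_entry i2])
    have a3: "set_integrable lborel {-1..0} (\<lambda>s. A3 s $ i $ j)" by (rule sint_bl(1)[OF bl_entry i3])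
    have d2: "(F2 has_field_derivative G2 z) (at z)" for z
      unfolding F2_def G2_def by (rule deriv_int[OF a2])
    have d3: "(F3 has_field_derivative G3 z) (at z)" for z
      unfolding F3_def G3_def by (rule deriv_int[OF a3])
    have e2: "(LINT s:{-1..0}|lborel. msc (exp (z * of_real s)) (A2 s)) $ i $ j
        = (LINT s:{-1..0}|lborel. exp (z * of_real s) * A2 s $ i $ j)" for z
      by (rule entry_int[OF i2 Sm meas_exp_lb norm_exp_ls])
    have e3: "(LINT s:{-1..0}|lborel. msc (exp (z * of_real s)) (A3 s)) $ i $ j
        = (LINT s:{-1..0}|lborel. exp (z * of_real s) * A3 s $ i $ j)" for z
      by (rule entry_int[OF i3 Sm meas_exp_lb norm_exp_ls])
    have f2: "(LINT s:{-1..0}|lborel. msc (of_real s * exp (z * of_real s)) (A2 s)) $ i $ j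
        = (LINT s:{-1..0}|lborel. of_real s * exp (z * of_real s) * A2 s $ i $ j)" for z
      by (rule entry_int[OF i2 Sm meas_sexp_lb norm_sexp_ls])
    have f3: "(LINT s:{-1..0}|lborel. msc (of_real s * exp (z * of_real s)) (A3 s)) $ i $ j
        = (LINT s:{-1..0}|lborel. of_real s * exp (z * of_real s) * A3 s $ i $ j)" for z
      by (rule entry_int[OF i3 Sm meas_sexp_lb norm_sexp_ls])
    have De: "(\<lambda>z. Delta Am1 A2 A3 z $ i $ j) = (\<lambda>z. - z * c1 + z * exp (-z) * c2 + z * F2 z + F3 z)"
    proof
      fix z
      show "Delta Am1 A2 A3 z $ i $ j = - z * c1 + z * exp (-z) * c2 + z * F2 z + F3 z"
        unfolding Delta_def c1_def c2_def F2_def F3_def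
        by (simp add: msc_entry e2 e3)
    qed
    have "((\<lambda>z. - z * c1 + z * exp (-z) * c2 + z * F2 z + F3 z) has_field_derivative
        (- c1 + (exp (-l) - l * exp (-l)) * c2 + (F2 l + l * G2 l) + G3 l)) (at l)"
    proof -
      have h1: "((\<lambda>z. - z * c1) has_field_derivative - c1) (at l)"
        by (auto intro!: derivative_eq_intros)
      have h2: "((\<lambda>z. z * exp (-z) * c2) has_field_derivative (exp (-l) - l * exp (-l)) * c2) (at l)"
        by (auto intro!: derivative_eq_intros simp: algebra_simps)
      have h3: "((\<lambda>z. z * F2 z) has_field_derivative (F2 l + l * G2 l)) (at l)"
        using DERIV_mult[OF DERIV_ident d2, of l] by (simp add: mult.commute)
      show ?thesis using DERIV_add[OF DERIV_add[OF DERIV_add[OF h1 h2] h3] d3] by simp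
    qed
    then have "deriv (\<lambda>z. Delta Am1 A2 A3 z $ i $ j) l = - c1 + (exp (-l) - l * exp (-l)) * c2 + (F2 l + l * G2 l) + G3 l"
      unfolding De by (rule DERIV_imp_deriv)
    also have "\<dots> = (msc (-1) (mat 1) + msc (exp (-l) - l * exp (-l)) Am1
     + (LINT s:{-1..0}|lborel. msc (exp (l * of_real s)) (A2 s))
     + msc l (LINT s:{-1..0}|lborel. msc (of_real s * exp (l * of_real s)) (A2 s))
     + (LINT s:{-1..0}|lborel. msc (of_real s * exp (l * of_real s)) (A3 s))) $ i $ j"
      unfolding c1_def c2_def F2_def G2_def G3_def
      by (simp add: msc_entry e2 f2 f3)
    finally show ?thesis .
  qed
  then show ?thesis unfolding Delta_deriv_def by (simp add: vec_eq_iff)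
qed



lemma psi_pt:
  fixes A2 A3 :: "real \<Rightarrow> complex^'n^'n"
  assumes i2: "set_integrable lborel {-1..0} A2" and i3: "set_integrable lborel {-1..0} A3"
    and t: "t \<in> {-1..0}"
  shows "cip (exp (l0 * of_real t) *s x) ((msc (cnj l1 * exp (- cnj l1 * of_real t)) (mat 1) - cadj (A2 t)
                 + msc (exp (- cnj l1 * of_real t))
                     (LBINT s=0..t. msc (exp (cnj l1 * of_real s))
                         (cadj (A3 s) + msc (cnj l1) (cadj (A2 s))))) *v y)
   = exp (l0 * of_real t) * (l1 * exp (- l1 * of_real t) * cip x y - cip (A2 t *v x) y
       - exp (- l1 * of_real t) * (LINT s:{t..0}|lborel. exp (l1 * of_real s) * (cip (A3 s *v x) y + l1 * cip (A2 s *v x) y)))"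
proof -
  define K where "K s = cadj (A3 s) + msc (cnj l1) (cadj (A2 s))" for s
  define N where "N s = msc (exp (cnj l1 * of_real s)) (K s)" for s
  have ic2: "set_integrable lborel {-1..0} (\<lambda>s. cadj (A2 s))" by (rule sint_bl(1)[OF bl_cadj i2])
  have ic3: "set_integrable lborel {-1..0} (\<lambda>s. cadj (A3 s))" by (rule sint_bl(1)[OF bl_cadj i3])
  have cm: "(\<lambda>s::real. cnj l1) \<in> borel_measurable lborel" by simp
  have im: "set_integrable lborel {-1..0} (\<lambda>s. msc (cnj l1) (cadj (A2 s)))"
    by (rule int_msc[OF ic2 Sm cm, of "cmod l1"]) simp
  have iK: "set_integrable lborel {-1..0} K"
    unfolding K_def by (rule set_integral_add(1)[OF ic3 im])
  have Tm: "{t..0} \<in> sets lborel" by simp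
  have Ts: "{t..0} \<subseteq> {-1..0}" using t by auto
  have iKt: "set_integrable lborel {t..0} K" by (rule set_integrable_subset[OF iK Tm Ts])
  have bnd: "\<And>s. s \<in> {t..0} \<Longrightarrow> cmod (exp (cnj l1 * of_real s)) \<le> exp (cmod (cnj l1))"
    using Ts norm_exp_ls by blast
  have Peq: "(LBINT s=0..t. N s) = - (LINT s:{t..0}|lborel. N s)"
  proof -
    have "(LBINT s=ereal t..ereal 0. N s) = (LINT s:{t..0}|lborel. N s)"
      by (rule interval_integral_Icc) (use t in auto)
    then show ?thesis
      by (subst interval_integral_endpoints_reverse) (simp add: zero_ereal_def)
  qed
  have Q: "cip x ((LINT s:{t..0}|lborel. N s) *v y)
      = (LINT s:{t..0}|lborel. cnj (exp (cnj l1 * of_real s)) * cip x (K s *v y))"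
    unfolding N_def by (rule cip_int_msc_r[OF iKt Tm meas_exp_lb bnd])
  have Kpt: "cnj (exp (cnj l1 * of_real s)) * cip x (K s *v y)
      = exp (l1 * of_real s) * (cip (A3 s *v x) y + l1 * cip (A2 s *v x) y)" for s
    unfolding K_def
    by (simp add: matrix_vector_mult_add_rdistrib cip_add_right msc_mv cip_scale_right cadj_mv exp_cnj)
  have main: "cip x ((msc (cnj l1 * exp (- cnj l1 * of_real t)) (mat 1) - cadj (A2 t)
                 + msc (exp (- cnj l1 * of_real t)) (LBINT s=0..t. N s)) *v y)
     = l1 * exp (- l1 * of_real t) * cip x y - cip (A2 t *v x) y
       - exp (- l1 * of_real t) * cip x ((LINT s:{t..0}|lborel. N s) *v y)"
    unfolding Peq
    by (simp add: matrix_vector_mult_add_rdistrib matrix_vector_mult_diff_rdistrib cip_add_right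
        cip_diff_right msc_mv cip_scale_right cadj_mv exp_cnj cip_neg_mat)
  show ?thesis
    unfolding cip_scale_left N_def[symmetric] K_def[symmetric] main Q Kpt ..
qed



lemma lin3:
  fixes f1 f2 f3 :: "real \<Rightarrow> complex"
  assumes "set_integrable M A f1" "set_integrable M A f2" "set_integrable M A f3"
  shows "(LINT x:A|M. c1 * f1 x + c2 * f2 x + c3 * f3 x)
     = c1 * (LINT x:A|M. f1 x) + c2 * (LINT x:A|M. f2 x) + c3 * (LINT x:A|M. f3 x)"
proof -
  have a: "set_integrable M A (\<lambda>x. c1 * f1 x)" "set_integrable M A (\<lambda>x. c2 * f2 x)"
    "set_integrable M A (\<lambda>x. c3 * f3 x)" using assms by auto
  have b: "set_integrable M A (\<lambda>x. c1 * f1 x + c2 * f2 x)" by (rule set_integral_add(1)[OF a(1) a(2)])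
  show ?thesis
    by (simp only: set_integral_add(2)[OF b a(3)] set_integral_add(2)[OF a(1) a(2)] set_integral_mult_right)
qed

lemma lin4:
  fixes f1 f2 f3 f4 :: "real \<Rightarrow> complex"
  assumes "set_integrable M A f1" "set_integrable M A f2" "set_integrable M A f3" "set_integrable M A f4"
  shows "(LINT x:A|M. c1 * f1 x + c2 * f2 x + c3 * f3 x + c4 * f4 x)
     = c1 * (LINT x:A|M. f1 x) + c2 * (LINT x:A|M. f2 x) + c3 * (LINT x:A|M. f3 x) + c4 * (LINT x:A|M. f4 x)"
proof -
  have a: "set_integrable M A (\<lambda>x. c1 * f1 x)" "set_integrable M A (\<lambda>x. c2 * f2 x)"
    "set_integrable M A (\<lambda>x. c3 * f3 x)" "set_integrable M A (\<lambda>x. c4 * f4 x)" using assms by auto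
  have b: "set_integrable M A (\<lambda>x. c1 * f1 x + c2 * f2 x)" by (rule set_integral_add(1)[OF a(1) a(2)])
  have c: "set_integrable M A (\<lambda>x. c1 * f1 x + c2 * f2 x + c3 * f3 x)" by (rule set_integral_add(1)[OF b a(3)])
  show ?thesis
    by (simp only: set_integral_add(2)[OF c a(4)] set_integral_add(2)[OF b a(3)]
        set_integral_add(2)[OF a(1) a(2)] set_integral_mult_right)
qed

theorem lemma1:
  fixes Am1 :: "complex^'n^'n" and A2 A3 :: "real \<Rightarrow> complex^'n^'n"
    and l0 l1 :: complex and x y :: "complex^'n"
    and phi psi :: "(complex^'n) \<times> (real \<Rightarrow> complex^'n)"
  assumes "L2mat A2" and "L2mat A3"
    and "det (Delta Am1 A2 A3 l0) = 0" and "det (Delta Am1 A2 A3 l1) = 0"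
    and "Delta Am1 A2 A3 l0 *v x = 0"
    and "Delta_star Am1 A2 A3 (cnj l1) *v y = 0"
    and "phi = ((mat 1 - msc (exp (-l0)) Am1) *v x, \<lambda>t. exp (l0 * of_real t) *s x)"
    and "psi = (y, \<lambda>t. (msc (cnj l1 * exp (- cnj l1 * of_real t)) (mat 1) - cadj (A2 t)
                 + msc (exp (- cnj l1 * of_real t))
                     (LBINT s=0..t. msc (exp (cnj l1 * of_real s))
                         (cadj (A3 s) + msc (cnj l1) (cadj (A2 s))))) *v y)"
  shows "(l0 \<noteq> l1 \<longrightarrow> M2_inner phi psi = 0) \<and>
         (l0 = l1 \<longrightarrow> M2_inner phi psi = - cip (Delta_deriv Am1 A2 A3 l0 *v x) y)"
proof -
  note hK0 = assms(5) and hK1 = assms(6) and hphi = assms(7) and hpsi = assms(8)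
  have i2: "set_integrable lborel {-1..0} A2" by (rule L2mat_int[OF assms(1)])
  have i3: "set_integrable lborel {-1..0} A3" by (rule L2mat_int[OF assms(2)])
  define S where "S = {-1..0::real}"
  define x0 where "x0 = cip x y"
  define a0 where "a0 = cip (Am1 *v x) y"
  define a2 where "a2 s = cip (A2 s *v x) y" for s
  define a3 where "a3 s = cip (A3 s *v x) y" for s
  define I2 where "I2 l = (LINT s:S|lborel. exp (l * of_real s) * a2 s)" for l
  define I3 where "I3 l = (LINT s:S|lborel. exp (l * of_real s) * a3 s)" for l
  define J2 where "J2 l = (LINT s:S|lborel. of_real s * exp (l * of_real s) * a2 s)" for l
  define J3 where "J3 l = (LINT s:S|lborel. of_real s * exp (l * of_real s) * a3 s)" for l
  have ia2: "set_integrable lborel S a2" unfolding a2_def S_def by (rule sint_bl(1)[OF bl_cipmv2 i2])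
  have ia3: "set_integrable lborel S a3" unfolding a3_def S_def by (rule sint_bl(1)[OF bl_cipmv2 i3])
  have Dc: "cip (Delta Am1 A2 A3 l *v x) y = - l * x0 + l * exp (-l) * a0 + l * I2 l + I3 l" for l
    unfolding x0_def a0_def I2_def I3_def a2_def a3_def S_def by (rule Dcip[OF i2 i3])
  have K0: "- l0 * x0 + l0 * exp (-l0) * a0 + l0 * I2 l0 + I3 l0 = 0"
    using Dc[of l0] hK0 by (simp add: cip_def)
  have K1: "- l1 * x0 + l1 * exp (-l1) * a0 + l1 * I2 l1 + I3 l1 = 0"
  proof -
    have "cip x (cadj (Delta Am1 A2 A3 l1) *v y) = 0"
      using hK1 unfolding Dstar[OF i2 i3] by (simp add: cip_def)
    then show ?thesis unfolding cadj_mv Dc .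
  qed
  define \<mu> where "\<mu> = l0 - l1"
  define C where "C s = exp (l1 * of_real s) * (a3 s + l1 * a2 s)" for s
  define W where "W t = (LINT s:{t..0}|lborel. C s)" for t
  define E where "E s = (LINT t:{-1..s}|lborel. exp (\<mu> * of_real t))" for s
  have ia2': "set_integrable lborel S (\<lambda>s. l1 * a2 s)" using ia2 by auto
  have iC0: "set_integrable lborel {-1..0} (\<lambda>s. a3 s + l1 * a2 s)"
    using set_integral_add(1)[OF ia3 ia2'] unfolding S_def .
  have iC: "set_integrable lborel {-1..0} C"
    unfolding C_def by (rule int_exp(1)[OF iC0])
  have fubE: "(LINT t:{-1..0}|lborel. exp (\<mu> * of_real t) * W t) = (LINT s:{-1..0}|lborel. C s * E s)"
    unfolding W_def E_def by (rule fub(1)[OF iC])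
  have fubI: "set_integrable lborel {-1..0} (\<lambda>t. exp (\<mu> * of_real t) * W t)"
    unfolding W_def by (rule fub(2)[OF iC])
  have Eval: "E s = (if \<mu> = 0 then of_real (s + 1) else (exp (\<mu> * of_real s) - exp (-\<mu>)) / \<mu>)"
    if "-1 \<le> s" for s
    unfolding E_def by (rule expint[OF that])
  have iE: "set_integrable lborel {-1..0::real} (\<lambda>t. exp (\<mu> * of_real t))"
    by (rule borel_integrable_atLeastAtMost') (intro continuous_intros)
  have ia2e: "set_integrable lborel {-1..0} (\<lambda>t. exp (l0 * of_real t) * a2 t)"
    using int_exp(1)[OF ia2[unfolded S_def]] .
  have fstpart: "cip ((mat 1 - msc (exp (-l0)) Am1) *v x) y = x0 - exp (-l0) * a0"
    by (simp add: matrix_vector_mult_diff_rdistrib cip_diff_left msc_mv cip_scale_left x0_def a0_def)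
  have ee: "exp (l0 * of_real t) * exp (- l1 * of_real t) = exp (\<mu> * of_real t)" for t :: real
    unfolding \<mu>_def exp_add[symmetric] by (simp add: algebra_simps)
  have sndpt: "cip (snd phi t) (snd psi t) = (l1 * x0) * exp (\<mu> * of_real t)
      + (-1) * (exp (l0 * of_real t) * a2 t) + (-1) * (exp (\<mu> * of_real t) * W t)"
    if t: "t \<in> {-1..0}" for t
  proof -
    have "cip (snd phi t) (snd psi t) = exp (l0 * of_real t) * (l1 * exp (- l1 * of_real t) * x0 - a2 t
       - exp (- l1 * of_real t) * W t)"
      unfolding hphi hpsi snd_conv psi_pt[OF i2 i3 t] x0_def a2_def a3_def W_def C_def ..
    also have "\<dots> = (l1 * x0) * (exp (l0 * of_real t) * exp (- l1 * of_real t))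
      + (-1) * (exp (l0 * of_real t) * a2 t) + (-1) * ((exp (l0 * of_real t) * exp (- l1 * of_real t)) * W t)"
      by (simp add: algebra_simps)
    finally show ?thesis unfolding ee .
  qed
  have M2eq: "M2_inner phi psi = x0 - exp (-l0) * a0 + (l1 * x0) * E 0 + (-1) * I2 l0
      + (-1) * (LINT t:{-1..0}|lborel. exp (\<mu> * of_real t) * W t)"
  proof -
    have "(LINT t:{-1..0}|lborel. cip (snd phi t) (snd psi t)) = (LINT t:{-1..0}|lborel. (l1 * x0) * exp (\<mu> * of_real t)
      + (-1) * (exp (l0 * of_real t) * a2 t) + (-1) * (exp (\<mu> * of_real t) * W t))"
      by (rule set_lebesgue_integral_cong) (auto simp: sndpt)
    also have "\<dots> = (l1 * x0) * E 0 + (-1) * I2 l0 + (-1) * (LINT t:{-1..0}|lborel. exp (\<mu> * of_real t) * W t)"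
      unfolding lin3[OF iE ia2e fubI] E_def I2_def S_def by simp
    finally show ?thesis unfolding M2_inner_def
      using fstpart hphi hpsi by simp
  qed
  have ie0: "set_integrable lborel {-1..0} (\<lambda>s. exp (l * of_real s) * a2 s)"
     "set_integrable lborel {-1..0} (\<lambda>s. exp (l * of_real s) * a3 s)"
     "set_integrable lborel {-1..0} (\<lambda>s. of_real s * exp (l * of_real s) * a2 s)"
     "set_integrable lborel {-1..0} (\<lambda>s. of_real s * exp (l * of_real s) * a3 s)" for l
    using int_exp[OF ia2[unfolded S_def]] int_exp[OF ia3[unfolded S_def]] by auto
  have case1: "M2_inner phi psi = 0" if ne: "l0 \<noteq> l1"
  proof -
    have mu: "\<mu> \<noteq> 0" using ne \<mu>_def by simp
    have ee2: "exp (l1 * of_real s) * exp (\<mu> * of_real s) = exp (l0 * of_real s)" for s :: real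
      unfolding \<mu>_def exp_add[symmetric] by (simp add: algebra_simps)
    have "(LINT s:{-1..0}|lborel. C s * E s) = (LINT s:{-1..0}|lborel.
        (1/\<mu>) * (exp (l0 * of_real s) * a3 s) + (l1/\<mu>) * (exp (l0 * of_real s) * a2 s)
        + (- exp (-\<mu>)/\<mu>) * (exp (l1 * of_real s) * a3 s) + (- exp (-\<mu>) * l1/\<mu>) * (exp (l1 * of_real s) * a2 s))"
    proof (rule set_lebesgue_integral_cong)
      show "\<forall>s. s \<in> {-1..0} \<longrightarrow> C s * E s = (1/\<mu>) * (exp (l0 * of_real s) * a3 s) + (l1/\<mu>) * (exp (l0 * of_real s) * a2 s)
        + (- exp (-\<mu>)/\<mu>) * (exp (l1 * of_real s) * a3 s) + (- exp (-\<mu>) * l1/\<mu>) * (exp (l1 * of_real s) * a2 s)"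
      proof (intro allI impI)
        fix s :: real assume "s \<in> {-1..0}"
        then have Es: "E s = (exp (\<mu> * of_real s) - exp (-\<mu>)) / \<mu>" using Eval[of s] mu by simp
        show "C s * E s = (1/\<mu>) * (exp (l0 * of_real s) * a3 s) + (l1/\<mu>) * (exp (l0 * of_real s) * a2 s)
        + (- exp (-\<mu>)/\<mu>) * (exp (l1 * of_real s) * a3 s) + (- exp (-\<mu>) * l1/\<mu>) * (exp (l1 * of_real s) * a2 s)"
          unfolding C_def ee2[symmetric] Es using mu by (simp add: field_simps)
      qed
    qed simp
    also have "\<dots> = (1/\<mu>) * I3 l0 + (l1/\<mu>) * I2 l0 + (- exp (-\<mu>)/\<mu>) * I3 l1 + (- exp (-\<mu>) * l1/\<mu>) * I2 l1"
      unfolding lin4[OF ie0(2) ie0(1) ie0(2) ie0(1)] I2_def I3_def S_def ..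
    finally have R: "(LINT s:{-1..0}|lborel. C s * E s) = \<dots>" .
    have E0: "E 0 = (1 - exp (-\<mu>)) / \<mu>" using Eval[of 0] mu by simp
    have I3l0: "I3 l0 = l0 * x0 - l0 * exp (-l0) * a0 - l0 * I2 l0" using K0 by (simp add: algebra_simps)
    have I3l1: "I3 l1 = l1 * x0 - l1 * exp (-l1) * a0 - l1 * I2 l1" using K1 by (simp add: algebra_simps)
    have l0e: "l0 = l1 + \<mu>" using \<mu>_def by simp
    have e0: "exp (-l0) = exp (-\<mu>) * exp (-l1)" unfolding l0e exp_add[symmetric] by (simp add: algebra_simps)
    show ?thesis unfolding M2eq fubE R E0 I3l0 I3l1 e0 unfolding l0e using mu
      by (simp add: field_simps)
  qed
  have case2: "M2_inner phi psi = - cip (Delta_deriv Am1 A2 A3 l0 *v x) y" if eq: "l0 = l1"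
  proof -
    have mu: "\<mu> = 0" using eq \<mu>_def by simp
    have "(LINT s:{-1..0}|lborel. C s * E s) = (LINT s:{-1..0}|lborel.
        1 * (of_real s * exp (l0 * of_real s) * a3 s) + l0 * (of_real s * exp (l0 * of_real s) * a2 s)
        + 1 * (exp (l0 * of_real s) * a3 s) + l0 * (exp (l0 * of_real s) * a2 s))"
    proof (rule set_lebesgue_integral_cong)
      show "\<forall>s. s \<in> {-1..0} \<longrightarrow> C s * E s = 1 * (of_real s * exp (l0 * of_real s) * a3 s) + l0 * (of_real s * exp (l0 * of_real s) * a2 s)
        + 1 * (exp (l0 * of_real s) * a3 s) + l0 * (exp (l0 * of_real s) * a2 s)"
      proof (intro allI impI)
        fix s :: real assume "s \<in> {-1..0}"
        then have Es: "E s = of_real (s + 1)" using Eval[of s] mu by simp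
        show "C s * E s = 1 * (of_real s * exp (l0 * of_real s) * a3 s) + l0 * (of_real s * exp (l0 * of_real s) * a2 s)
        + 1 * (exp (l0 * of_real s) * a3 s) + l0 * (exp (l0 * of_real s) * a2 s)"
          unfolding C_def eq Es by (simp add: algebra_simps)
      qed
    qed simp
    also have "\<dots> = 1 * J3 l0 + l0 * J2 l0 + 1 * I3 l0 + l0 * I2 l0"
      unfolding lin4[OF ie0(4) ie0(3) ie0(2) ie0(1)] I2_def I3_def J2_def J3_def S_def ..
    finally have R: "(LINT s:{-1..0}|lborel. C s * E s) = \<dots>" .
    have E0: "E 0 = 1" using Eval[of 0] mu by simp
    have c1: "cip ((LINT s:{-1..0}|lborel. msc (exp (l0 * of_real s)) (A2 s)) *v x) y = I2 l0"
      unfolding I2_def a2_def S_def by (rule cip_int_msc_l[OF i2 Sm meas_exp_lb norm_exp_ls])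
    have c2: "cip ((LINT s:{-1..0}|lborel. msc (of_real s * exp (l0 * of_real s)) (A2 s)) *v x) y = J2 l0"
      unfolding J2_def a2_def S_def by (rule cip_int_msc_l[OF i2 Sm meas_sexp_lb norm_sexp_ls])
    have c3: "cip ((LINT s:{-1..0}|lborel. msc (of_real s * exp (l0 * of_real s)) (A3 s)) *v x) y = J3 l0"
      unfolding J3_def a3_def S_def by (rule cip_int_msc_l[OF i3 Sm meas_sexp_lb norm_sexp_ls])
    have Dd: "cip (Delta_deriv Am1 A2 A3 l0 *v x) y = - x0 + (exp (-l0) - l0 * exp (-l0)) * a0
        + I2 l0 + l0 * J2 l0 + J3 l0"
      unfolding Dderiv[OF i2 i3]
      by (simp add: matrix_vector_mult_add_rdistrib cip_add_left msc_mv cip_scale_left cip_diff_left left_diff_distrib c1 c2 c3 x0_def a0_def)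
    have I3l0: "I3 l0 = l0 * x0 - l0 * exp (-l0) * a0 - l0 * I2 l0" using K0 by (simp add: algebra_simps)
    show ?thesis unfolding M2eq fubE R E0 Dd I3l0 eq[symmetric]
      by (simp add: algebra_simps)
  qed
  show ?thesis using case1 case2 by blast
qed


end
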